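(* For every integer $n\ge6$, either $v_n>1$ or the numerator of the rational number $v_n$ written in lowest terms is not $1$.
   Context: $v_n:=\prod_{i=1}^n \frac{|\zeta(1-2i)|}{2}$, where $\zeta$ is the Riemann zeta function (so $|\zeta(1-2i)|/2=|B_{2i}|/(4i)$ with $B_{2i}$ the Bernoulli numbers). *)

theory Defs
  imports Complex_Main
begin

text \<open>Bernoulli numbers B_m (convention B_1 = -1/2; irrelevant here since only even
  indices 2i with i >= 1 are used), defined by the standard recurrence
  sum_{k=0}^{m} (m+1 choose k) B_k = 0 for m >= 1, B_0 = 1.\<close>
fun bernoulli :: "nat \<Rightarrow> rat" where
  "bernoulli m =
     (if m = 0 then 1
      else - (\<Sum>k<m. of_nat ((m + 1) choose k) * bernoulli k) / of_nat (m + 1))"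

text \<open>v_n = prod_{i=1}^n |zeta(1-2i)|/2 = prod_{i=1}^n |B_{2i}|/(4i), as a rational number.\<close>
definition v :: "nat \<Rightarrow> rat" where
  "v n = (\<Prod>i=1..n. \<bar>bernoulli (2 * i)\<bar> / of_nat (4 * i))"

lemma "bernoulli 2 = 1/6" "bernoulli 4 = -1/30" "bernoulli 12 = -691/2730"
  by (simp_all add: eval_nat_numeral lessThan_Suc)

end

theory Submission
  imports Defs "HOL-Computational_Algebra.Formal_Power_Series"
begin
unbundle fps_syntax

lemma b0: "bernoulli 0 = 1" by simp
lemma b1: "bernoulli 1 = - (1 / 2)"
  by (subst bernoulli.simps) (simp add: lessThan_nat_numeral binomial_fact' fact_numeral b0 del: bernoulli.simps)
lemma b1s: "bernoulli (Suc 0) = - (1 / 2)" using b1 by simp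
lemma b2: "bernoulli 2 = 1 / 6"
  by (subst bernoulli.simps) (simp add: lessThan_nat_numeral binomial_fact' fact_numeral b0 b1 b1s del: bernoulli.simps)
lemma b3: "bernoulli 3 = 0"
  by (subst bernoulli.simps) (simp add: lessThan_nat_numeral binomial_fact' fact_numeral b0 b1 b1s b2 del: bernoulli.simps)
lemma b4: "bernoulli 4 = - (1 / 30)"
  by (subst bernoulli.simps) (simp add: lessThan_nat_numeral binomial_fact' fact_numeral b0 b1 b1s b2 b3 del: bernoulli.simps)
lemma b5: "bernoulli 5 = 0"
  by (subst bernoulli.simps) (simp add: lessThan_nat_numeral binomial_fact' fact_numeral b0 b1 b1s b2 b3 b4 del: bernoulli.simps)
lemma b6: "bernoulli 6 = 1 / 42"
  by (subst bernoulli.simps) (simp add: lessThan_nat_numeral binomial_fact' fact_numeral b0 b1 b1s b2 b3 b4 b5 del: bernoulli.simps)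
lemma b7: "bernoulli 7 = 0"
  by (subst bernoulli.simps) (simp add: lessThan_nat_numeral binomial_fact' fact_numeral b0 b1 b1s b2 b3 b4 b5 b6 del: bernoulli.simps)
lemma b8: "bernoulli 8 = - (1 / 30)"
  by (subst bernoulli.simps) (simp add: lessThan_nat_numeral binomial_fact' fact_numeral b0 b1 b1s b2 b3 b4 b5 b6 b7 del: bernoulli.simps)
lemma b9: "bernoulli 9 = 0"
  by (subst bernoulli.simps) (simp add: lessThan_nat_numeral binomial_fact' fact_numeral b0 b1 b1s b2 b3 b4 b5 b6 b7 b8 del: bernoulli.simps)
lemma b10: "bernoulli 10 = 5 / 66"
  by (subst bernoulli.simps) (simp add: lessThan_nat_numeral binomial_fact' fact_numeral b0 b1 b1s b2 b3 b4 b5 b6 b7 b8 b9 del: bernoulli.simps)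
lemma b11: "bernoulli 11 = 0"
  by (subst bernoulli.simps) (simp add: lessThan_nat_numeral binomial_fact' fact_numeral b0 b1 b1s b2 b3 b4 b5 b6 b7 b8 b9 b10 del: bernoulli.simps)
lemma b12: "bernoulli 12 = - (691 / 2730)"
  by (subst bernoulli.simps) (simp add: lessThan_nat_numeral binomial_fact' fact_numeral b0 b1 b1s b2 b3 b4 b5 b6 b7 b8 b9 b10 b11 del: bernoulli.simps)
lemma b13: "bernoulli 13 = 0"
  by (subst bernoulli.simps) (simp add: lessThan_nat_numeral binomial_fact' fact_numeral b0 b1 b1s b2 b3 b4 b5 b6 b7 b8 b9 b10 b11 b12 del: bernoulli.simps)
lemma b14: "bernoulli 14 = 7 / 6"
  by (subst bernoulli.simps) (simp add: lessThan_nat_numeral binomial_fact' fact_numeral b0 b1 b1s b2 b3 b4 b5 b6 b7 b8 b9 b10 b11 b12 b13 del: bernoulli.simps)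
lemma b15: "bernoulli 15 = 0"
  by (subst bernoulli.simps) (simp add: lessThan_nat_numeral binomial_fact' fact_numeral b0 b1 b1s b2 b3 b4 b5 b6 b7 b8 b9 b10 b11 b12 b13 b14 del: bernoulli.simps)
lemma b16: "bernoulli 16 = - (3617 / 510)"
  by (subst bernoulli.simps) (simp add: lessThan_nat_numeral binomial_fact' fact_numeral b0 b1 b1s b2 b3 b4 b5 b6 b7 b8 b9 b10 b11 b12 b13 b14 b15 del: bernoulli.simps)
lemma b17: "bernoulli 17 = 0"
  by (subst bernoulli.simps) (simp add: lessThan_nat_numeral binomial_fact' fact_numeral b0 b1 b1s b2 b3 b4 b5 b6 b7 b8 b9 b10 b11 b12 b13 b14 b15 b16 del: bernoulli.simps)
lemma b18: "bernoulli 18 = 43867 / 798"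
  by (subst bernoulli.simps) (simp add: lessThan_nat_numeral binomial_fact' fact_numeral b0 b1 b1s b2 b3 b4 b5 b6 b7 b8 b9 b10 b11 b12 b13 b14 b15 b16 b17 del: bernoulli.simps)
lemma b19: "bernoulli 19 = 0"
  by (subst bernoulli.simps) (simp add: lessThan_nat_numeral binomial_fact' fact_numeral b0 b1 b1s b2 b3 b4 b5 b6 b7 b8 b9 b10 b11 b12 b13 b14 b15 b16 b17 b18 del: bernoulli.simps)
lemma b20: "bernoulli 20 = - (174611 / 330)"
  by (subst bernoulli.simps) (simp add: lessThan_nat_numeral binomial_fact' fact_numeral b0 b1 b1s b2 b3 b4 b5 b6 b7 b8 b9 b10 b11 b12 b13 b14 b15 b16 b17 b18 b19 del: bernoulli.simps)
lemma b21: "bernoulli 21 = 0"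
  by (subst bernoulli.simps) (simp add: lessThan_nat_numeral binomial_fact' fact_numeral b0 b1 b1s b2 b3 b4 b5 b6 b7 b8 b9 b10 b11 b12 b13 b14 b15 b16 b17 b18 b19 b20 del: bernoulli.simps)
lemma b22: "bernoulli 22 = 854513 / 138"
  by (subst bernoulli.simps) (simp add: lessThan_nat_numeral binomial_fact' fact_numeral b0 b1 b1s b2 b3 b4 b5 b6 b7 b8 b9 b10 b11 b12 b13 b14 b15 b16 b17 b18 b19 b20 b21 del: bernoulli.simps)
lemma b23: "bernoulli 23 = 0"
  by (subst bernoulli.simps) (simp add: lessThan_nat_numeral binomial_fact' fact_numeral b0 b1 b1s b2 b3 b4 b5 b6 b7 b8 b9 b10 b11 b12 b13 b14 b15 b16 b17 b18 b19 b20 b21 b22 del: bernoulli.simps)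
lemma b24: "bernoulli 24 = - (236364091 / 2730)"
  by (subst bernoulli.simps) (simp add: lessThan_nat_numeral binomial_fact' fact_numeral b0 b1 b1s b2 b3 b4 b5 b6 b7 b8 b9 b10 b11 b12 b13 b14 b15 b16 b17 b18 b19 b20 b21 b22 b23 del: bernoulli.simps)
lemma b25: "bernoulli 25 = 0"
  by (subst bernoulli.simps) (simp add: lessThan_nat_numeral binomial_fact' fact_numeral b0 b1 b1s b2 b3 b4 b5 b6 b7 b8 b9 b10 b11 b12 b13 b14 b15 b16 b17 b18 b19 b20 b21 b22 b23 b24 del: bernoulli.simps)
lemma b26: "bernoulli 26 = 8553103 / 6"
  by (subst bernoulli.simps) (simp add: lessThan_nat_numeral binomial_fact' fact_numeral b0 b1 b1s b2 b3 b4 b5 b6 b7 b8 b9 b10 b11 b12 b13 b14 b15 b16 b17 b18 b19 b20 b21 b22 b23 b24 b25 del: bernoulli.simps)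
lemma b27: "bernoulli 27 = 0"
  by (subst bernoulli.simps) (simp add: lessThan_nat_numeral binomial_fact' fact_numeral b0 b1 b1s b2 b3 b4 b5 b6 b7 b8 b9 b10 b11 b12 b13 b14 b15 b16 b17 b18 b19 b20 b21 b22 b23 b24 b25 b26 del: bernoulli.simps)
lemma b28: "bernoulli 28 = - (23749461029 / 870)"
  by (subst bernoulli.simps) (simp add: lessThan_nat_numeral binomial_fact' fact_numeral b0 b1 b1s b2 b3 b4 b5 b6 b7 b8 b9 b10 b11 b12 b13 b14 b15 b16 b17 b18 b19 b20 b21 b22 b23 b24 b25 b26 b27 del: bernoulli.simps)

lemma bern_rec: "m \<ge> 1 \<Longrightarrow> (\<Sum>k\<le>m. of_nat ((m+1) choose k) * bernoulli k) = 0"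
proof -
  assume m: "m \<ge> 1"
  define S where "S = (\<Sum>k<m. of_nat ((m + 1) choose k) * bernoulli k :: rat)"
  have b: "bernoulli m = - S / of_nat (m+1)" using m by (subst bernoulli.simps) (simp add: S_def)
  have "(\<Sum>k\<le>m. of_nat ((m+1) choose k) * bernoulli k) = S + of_nat (m+1) * bernoulli m"
    by (simp add: S_def lessThan_Suc_atMost[symmetric])
  also have "\<dots> = 0" using b by (simp add: field_simps del: of_nat_Suc)
  finally show ?thesis .
qed

declare bernoulli.simps[simp del]
lemma bern0[simp]: "bernoulli 0 = 1" by (simp add: bernoulli.simps)

definition FB :: "rat fps" where "FB = Abs_fps (\<lambda>k. bernoulli k / fact k)"
definition EE :: "rat fps" where "EE = fps_exp 1 - 1"

lemma EE_nth: "EE $ j = (if j = 0 then 0 else 1 / fact j)"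
  by (simp add: EE_def)

lemma FB_nth: "FB $ k = bernoulli k / fact k" by (simp add: FB_def)

lemma FE: "FB * EE = fps_X"
proof (rule fps_ext)
  fix n
  show "(FB * EE) $ n = fps_X $ n"
  proof (cases n)
    case 0 then show ?thesis by (simp add: EE_nth)
  next
    case (Suc m)
    have "(FB * EE) $ n = (\<Sum>i=0..Suc m. bernoulli i / fact i * EE $ (Suc m - i))"
      by (simp add: fps_mult_nth FB_nth Suc)
    also have "\<dots> = (\<Sum>i=0..m. bernoulli i / fact i * (1 / fact (Suc m - i)))"
      by (simp add: EE_nth Suc_diff_le ac_simps)
    also have "\<dots> = (\<Sum>i=0..m. of_nat ((m+1) choose i) * bernoulli i / fact (Suc m))"
      by (rule sum.cong) (auto simp: binomial_fact Suc_diff_le field_simps simp del: of_nat_Suc fact_Suc)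
    also have "\<dots> = (\<Sum>i\<le>m. of_nat ((m+1) choose i) * bernoulli i) / fact (Suc m)"
      by (simp add: sum_divide_distrib atLeast0AtMost)
    also have "\<dots> = fps_X $ n"
    proof (cases "m = 0")
      case True then show ?thesis by (simp add: Suc)
    next
      case False then show ?thesis using bern_rec[of m] by (simp add: Suc)
    qed
    finally show ?thesis .
  qed
qed

lemma FE': "fps_deriv FB * EE + FB * (EE + 1) = 1"
proof -
  have "fps_deriv (FB * EE) = 1" by (simp add: FE)
  moreover have "fps_deriv EE = EE + 1" by (simp add: EE_def)
  ultimately show ?thesis by (simp add: add.commute)
qed

lemma EE_nz: "EE \<noteq> 0"
proof
  assume "EE = 0" then have "EE $ 1 = 0" by simp
  then show False by (simp add: EE_nth)
qed

lemma FF: "FB * FB = (1 - fps_X) * FB - fps_X * fps_deriv FB"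
proof -
  have "(FB * FB - ((1 - fps_X) * FB - fps_X * fps_deriv FB)) * (EE * EE) = 0"
  proof -
    let ?X = "fps_X :: rat fps" and ?D = "fps_deriv FB"
    have d: "?D * EE = 1 - ?X - FB" using FE FE' by (simp add: algebra_simps)
    have "(FB * FB - ((1 - ?X) * FB - ?X * ?D)) * (EE * EE)
        = (FB*EE)*(FB*EE) - (1 - ?X)*(FB*EE)*EE + ?X*EE*(?D*EE)" by (simp add: algebra_simps)
    also have "\<dots> = ?X*?X - (1 - ?X)*?X*EE + ?X*EE*(1 - ?X - FB)"
      unfolding FE d ..
    also have "\<dots> = ?X*?X - (1 - ?X)*?X*EE + ?X*EE*(1 - ?X) - ?X*(FB*EE)"
      by (simp add: algebra_simps)
    also have "\<dots> = 0" unfolding FE by (simp add: algebra_simps)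
    finally show ?thesis .
  qed
  then show ?thesis using EE_nz by simp
qed

lemma quad: "(\<Sum>i=0..Suc m. of_nat (Suc m choose i) * (bernoulli i * bernoulli (Suc m - i)))
   = - of_nat m * bernoulli (Suc m) - of_nat (Suc m) * bernoulli m"
proof -
  have h: "(FB*FB) $ Suc m = ((1 - fps_X)*FB - fps_X*fps_deriv FB) $ Suc m" using FF by simp
  have r: "((1 - fps_X)*FB - fps_X*fps_deriv FB) $ Suc m = bernoulli (Suc m)/fact (Suc m)
     - bernoulli m / fact m - of_nat (Suc m) * (bernoulli (Suc m)/fact (Suc m))"
    by (simp add: left_diff_distrib FB_nth)
  have l: "(FB*FB) $ Suc m = (\<Sum>i=0..Suc m. of_nat (Suc m choose i) * (bernoulli i * bernoulli (Suc m - i)) / fact (Suc m))"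
    unfolding fps_mult_nth FB_nth
    by (rule sum.cong) (auto simp: binomial_fact field_simps simp del: of_nat_Suc fact_Suc)
  have "(\<Sum>i=0..Suc m. of_nat (Suc m choose i) * (bernoulli i * bernoulli (Suc m - i)))
      = fact (Suc m) * (FB*FB) $ Suc m"
    unfolding l by (simp add: sum_divide_distrib[symmetric])
  also have "\<dots> = fact (Suc m) * (bernoulli (Suc m)/fact (Suc m)
     - bernoulli m / fact m - of_nat (Suc m) * (bernoulli (Suc m)/fact (Suc m)))"
    using h r by simp
  also have "\<dots> = - of_nat m * bernoulli (Suc m) - of_nat (Suc m) * bernoulli m"
  proof -
    have f: "(fact (Suc m)::rat) = of_nat (Suc m) * fact m" by simp
    have p: "(fact (Suc m) :: rat) \<noteq> 0" "(fact m :: rat) \<noteq> 0" by simp_all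
    have e1: "(fact (Suc m)::rat) * (bernoulli (Suc m)/fact (Suc m)) = bernoulli (Suc m)" using p by simp
    have e2: "(fact (Suc m)::rat) * (bernoulli m/fact m) = of_nat (Suc m) * bernoulli m" unfolding f using p by simp
    have "(fact (Suc m)::rat) * (bernoulli (Suc m)/fact (Suc m) - bernoulli m / fact m - of_nat (Suc m) * (bernoulli (Suc m)/fact (Suc m)))
       = bernoulli (Suc m) - of_nat (Suc m) * bernoulli m - of_nat (Suc m) * bernoulli (Suc m)" 
      by (simp only: right_diff_distrib e1 e2 mult.left_commute[of "fact (Suc m)" "of_nat (Suc m)"])
    also have "\<dots> = - of_nat m * bernoulli (Suc m) - of_nat (Suc m) * bernoulli m" by (simp add: algebra_simps)
    finally show ?thesis .
  qed
  finally show ?thesis .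
qed

lemma bern1: "bernoulli (Suc 0) = - 1/2"
  by (simp add: bernoulli.simps)


lemma odd0: "j \<ge> 1 \<Longrightarrow> bernoulli (2*j+1) = 0"
proof (induction j rule: less_induct)
  case (less j)
  define g where "g i = of_nat (Suc (2*j) choose i) * (bernoulli i * bernoulli (Suc (2*j) - i))" for i
  have z: "g i = 0" if "i \<in> {0..Suc (2*j)} - {0, 1, 2*j, Suc (2*j)}" for i
  proof -
    from that have i: "2 \<le> i" "i \<le> 2*j - 1" by auto
    show ?thesis
    proof (cases "odd i")
      case True
      then obtain k where k: "i = 2*k+1" by (metis oddE)
      with i have "1 \<le> k" "k < j" by auto
      then have "bernoulli i = 0" using less.IH k by blast
      then show ?thesis by (simp add: g_def)
    next
      case False
      then obtain k where k: "i = 2*k" by blast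
      have e: "Suc (2*j) - i = 2*(j-k)+1" using k i by auto
      have "1 \<le> j - k" "j - k < j" using k i by auto
      then have "bernoulli (Suc (2*j) - i) = 0" using less.IH e by metis
      then show ?thesis by (simp add: g_def)
    qed
  qed
  have "sum g {0..Suc (2*j)} = sum g {0, 1, 2*j, Suc (2*j)}"
    by (rule sum.mono_neutral_right) (use z less.prems in auto)
  also have "\<dots> = g 0 + g 1 + g (2*j) + g (Suc (2*j))"
    using less.prems by simp
  also have "\<dots> = 2 * bernoulli (Suc (2*j)) - of_nat (Suc (2*j)) * bernoulli (2*j)"
    by (simp add: g_def bern1 field_simps)
  finally have "2 * bernoulli (Suc (2*j)) - of_nat (Suc (2*j)) * bernoulli (2*j)
     = - of_nat (2*j) * bernoulli (Suc (2*j)) - of_nat (Suc (2*j)) * bernoulli (2*j)"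
    using quad[of "2*j"] by (simp add: g_def)
  then have h2: "2 * bernoulli (Suc (2*j)) + of_nat (2*j) * bernoulli (Suc (2*j)) = 0" by linarith
  have "(2 + 2 * of_nat j) * bernoulli (Suc (2*j)) = 2 * bernoulli (Suc (2*j)) + of_nat (2*j) * bernoulli (Suc (2*j))"
    by (simp add: distrib_right)
  then have "(2 + 2 * of_nat j) * bernoulli (Suc (2*j)) = 0" using h2 by simp
  moreover have "(0::rat) < 2 + 2 * of_nat j" by (simp add: add_pos_nonneg)
  ultimately show ?case by simp
qed

lemma even_rec: "n \<ge> 2 \<Longrightarrow> (\<Sum>j=1..n-1. of_nat ((2*n) choose (2*j)) * (bernoulli (2*j) * bernoulli (2*(n-j))))
   = - of_nat (2*n+1) * bernoulli (2*n)"
proof -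
  assume n: "n \<ge> 2"
  define g where "g i = of_nat ((2*n) choose i) * (bernoulli i * bernoulli (2*n - i))" for i
  have nn: "2*n - 1 = 2*(n-1)+1" using n by simp
  have b1: "bernoulli (2*n - 1) = 0" unfolding nn using n by (intro odd0) simp
  have q: "sum g {0..2*n} = - of_nat (2*n-1) * bernoulli (2*n)"
  proof -
    define m where "m = 2*n - 1"
    have m: "Suc m = 2*n" using n unfolding m_def by simp
    have "sum g {0..Suc m} = - of_nat m * bernoulli (Suc m) - of_nat (Suc m) * bernoulli m"
      unfolding g_def m[symmetric] by (rule quad)
    then have "sum g {0..2*n} = - of_nat m * bernoulli (2*n) - of_nat (2*n) * bernoulli m"
      by (simp only: m)
    then show ?thesis using b1 unfolding m_def by simp
  qed
  have z: "g i = 0" if "i \<in> {0..2*n} - (\<lambda>j. 2*j) ` {0..n}" for i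
  proof -
    from that have "odd i" "i \<le> 2*n" by auto
    then obtain k where k: "i = 2*k+1" by (metis oddE)
    show ?thesis
    proof (cases "k = 0")
      case True then have "2*n - i = 2*(n-1) + 1" using k n by auto
      then have "bernoulli (2*n - i) = 0" using odd0[of "n-1"] n by simp
      then show ?thesis by (simp add: g_def)
    next
      case False then have "bernoulli i = 0" using odd0[of k] k by simp
      then show ?thesis by (simp add: g_def)
    qed
  qed
  have "sum g {0..2*n} = sum g ((\<lambda>j. 2*j) ` {0..n})"
    by (rule sum.mono_neutral_right) (use z in auto)
  also have "\<dots> = (\<Sum>j=0..n. g (2*j))"
    by (subst sum.reindex) (auto simp: inj_on_def)
  also have "{0..n} = insert 0 (insert n {1..n-1})" using n by auto
  also have "(\<Sum>j\<in>insert 0 (insert n {1..n-1}). g (2*j)) = g 0 + g (2*n) + (\<Sum>j=1..n-1. g (2*j))"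
    using n by simp
  also have "g 0 + g (2*n) = 2 * bernoulli (2*n)" by (simp add: g_def)
  finally have e0: "sum g {0..2*n} = 2 * bernoulli (2*n) + (\<Sum>j=1..n-1. g (2*j))" .
  have o1: "(of_nat (2*n-1) :: rat) = 2 * of_nat n - 1" using n by (simp add: of_nat_diff)
  have o2: "(of_nat (2*n+1) :: rat) = 2 * of_nat n + 1" by simp
  have r: "- (2 * of_nat n - 1) * bernoulli (2*n) - 2 * bernoulli (2*n) = - (2 * of_nat n + 1) * (bernoulli (2*n) :: rat)"
    by (simp add: algebra_simps)
  have e: "(\<Sum>j=1..n-1. g (2*j)) = - of_nat (2*n+1) * bernoulli (2*n)"
    using e0 q r unfolding o1 o2 by linarith
  have "(\<Sum>j=1..n-1. g (2*j)) = (\<Sum>j=1..n-1. of_nat ((2*n) choose (2*j)) * (bernoulli (2*j) * bernoulli (2*(n-j))))"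
    by (rule sum.cong) (auto simp: g_def diff_mult_distrib2)
  then show ?thesis using e by simp
qed

definition t :: "nat \<Rightarrow> rat" where "t j = (-1)^(j+1) * bernoulli (2*j)"

lemma bern_t: "bernoulli (2*j) = (-1)^(j+1) * t j"
  by (simp add: t_def flip: power_add mult.assoc)

lemma t_rec: "n \<ge> 2 \<Longrightarrow> of_nat (2*n+1) * t n = (\<Sum>j=1..n-1. of_nat ((2*n) choose (2*j)) * (t j * t (n-j)))"
proof -
  assume n: "n \<ge> 2"
  have "(\<Sum>j=1..n-1. of_nat ((2*n) choose (2*j)) * (t j * t (n-j)))
     = (\<Sum>j=1..n-1. (-1)^n * (of_nat ((2*n) choose (2*j)) * (bernoulli (2*j) * bernoulli (2*(n-j)))))"
  proof (rule sum.cong)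
    fix j assume j: "j \<in> {1..n-1}"
    have jn: "j+1+(n-j+1) = n+2" using j by auto
    have "(-1::rat)^(j+1) * (-1)^(n-j+1) = (-1)^(n+2)"
      by (simp only: power_add[symmetric] jn)
    then have s: "(-1::rat)^(j+1) * (-1)^(n-j+1) = (-1)^n" by simp
    show "of_nat ((2*n) choose (2*j)) * (t j * t (n-j)) = (-1)^n * (of_nat ((2*n) choose (2*j)) * (bernoulli (2*j) * bernoulli (2*(n-j))))"
      unfolding t_def using s by (simp add: algebra_simps)
  qed simp
  also have "\<dots> = (-1)^n * (\<Sum>j=1..n-1. of_nat ((2*n) choose (2*j)) * (bernoulli (2*j) * bernoulli (2*(n-j))))"
    by (simp only: sum_distrib_left)
  also have "\<dots> = (-1)^n * (- of_nat (2*n+1) * bernoulli (2*n))"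
    by (simp only: even_rec[OF n])
  also have "\<dots> = of_nat (2*n+1) * t n" by (simp add: t_def algebra_simps)
  finally show ?thesis by simp
qed


lemma t1: "t 1 = 1/6" by (simp add: t_def b2)
lemma t1s: "t (Suc 0) = 1/6" using t1 by simp

lemma t_pos: "n \<ge> 1 \<Longrightarrow> t n > 0"
proof (induction n rule: less_induct)
  case (less n)
  show ?case
  proof (cases "n = 1")
    case True then show ?thesis by (simp add: t1s)
  next
    case False
    then have n: "n \<ge> 2" using less.prems by simp
    have "(\<Sum>j=1..n-1. of_nat ((2*n) choose (2*j)) * (t j * t (n-j))) > 0"
    proof (rule sum_pos)
      show "{1..n-1} \<noteq> {}" using n by simp
      fix j assume j: "j \<in> {1..n-1}"
      have "t j > 0" using j n by (intro less.IH) auto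
      moreover have "t (n-j) > 0" using j n by (intro less.IH) auto
      moreover have "2*j \<le> 2*n" using j by auto
      then have "(0::rat) < of_nat ((2*n) choose (2*j))" by simp
      ultimately show "0 < of_nat ((2*n) choose (2*j)) * (t j * t (n-j))" by simp
    qed simp
    then have "of_nat (2*n+1) * t n > 0" using t_rec[OF n] by simp
    then show ?thesis by (simp add: zero_less_mult_iff)
  qed
qed

lemma t_grow: "n \<ge> 3 \<Longrightarrow> of_nat n * (2*of_nat n - 1) * t (n-1) / 3 \<le> (2*of_nat n + 1) * t n"
proof -
  assume n: "n \<ge> 3"
  define f where "f j = of_nat ((2*n) choose (2*j)) * (t j * t (n-j))" for j
  have "f 1 + f (n-1) = sum f {1, n-1}" using n by simp
  also have "\<dots> \<le> sum f {1..n-1}"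
  proof (rule sum_mono2)
    show "{1, n-1} \<subseteq> {1..n-1}" using n by auto
    fix j assume "j \<in> {1..n-1} - {1, n-1}"
    then have "t j > 0" "t (n-j) > 0" by (auto intro!: t_pos)
    then show "0 \<le> f j" by (simp add: f_def)
  qed simp
  also have "\<dots> = of_nat (2*n+1) * t n" using t_rec[of n] n by (simp add: f_def)
  finally have A: "f 1 + f (n-1) \<le> of_nat (2*n+1) * t n" .
  have c1: "(2*n) choose 2 = n * (2*n-1)" by (simp add: choose_two)
  have c2: "(2*n) choose (2*(n-1)) = (2*n) choose 2"
    using binomial_symmetric[of 2 "2*n"] n by (simp add: diff_mult_distrib2)
  have f1: "f 1 = of_nat (n * (2*n-1)) * (t 1 * t (n-1))" by (simp add: f_def c1)
  have nn: "n - (n-1) = 1" using n by simp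
  have f2: "f (n-1) = of_nat (n * (2*n-1)) * (t 1 * t (n-1))"
    unfolding f_def c2 c1 nn by simp
  have "f 1 + f (n-1) = 2 * of_nat (n * (2*n-1)) * (t 1 * t (n-1))"
    unfolding f1 f2 by simp
  also have "\<dots> = of_nat n * (2*of_nat n - 1) * t (n-1) / 3"
    using n by (simp add: t1 t1s of_nat_diff)
  finally have B: "f 1 + f (n-1) = of_nat n * (2*of_nat n - 1) * t (n-1) / 3" .
  have C: "of_nat (2*n+1) * t n = (2*of_nat n + (1::rat)) * t n" by simp
  show ?thesis using A B C by linarith
qed

lemma t_big: "n \<ge> 9 \<Longrightarrow> t n \<ge> 4 * of_nat n"
proof (induction n rule: dec_induct)
  case base then show ?case by (simp add: t_def b18)
next
  case (step n)
  define x where "x = (of_nat n :: rat)"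
  have x9: "x \<ge> 9" using step.hyps unfolding x_def by simp
  have g: "(of_nat (Suc n)) * (2*of_nat (Suc n) - 1) * t n / 3 \<le> (2*of_nat (Suc n) + 1) * t (Suc n)"
    using t_grow[of "Suc n"] step.hyps by simp
  then have g': "(x+1) * (2*x+1) * t n / 3 \<le> (2*x+3) * t (Suc n)" unfolding x_def by (simp add: algebra_simps)
  have T: "t n \<ge> 4*x" using step.IH unfolding x_def .
  have "(x+1) * (2*x+1) * (4*x) / 3 \<le> (x+1) * (2*x+1) * t n / 3"
    using T x9 by (intro divide_right_mono mult_left_mono) auto
  moreover have "(2*x+3) * (4*(x+1)) \<le> (x+1) * (2*x+1) * (4*x) / 3"
  proof -
    have "19*x \<le> (2*x+1)*x" using x9 by (intro mult_right_mono) auto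
    moreover have "3*(2*x+3) \<le> 19*x" using x9 by (simp add: algebra_simps)
    ultimately have "3*(2*x+3) \<le> (2*x+1)*x" by (rule order_trans[rotated])
    then have "3*(2*x+3) * (4*(x+1)) \<le> (2*x+1)*x * (4*(x+1))" using x9 by (intro mult_right_mono) auto
    then show ?thesis by (simp add: algebra_simps)
  qed
  ultimately have "(2*x+3) * (4*(x+1)) \<le> (2*x+3) * t (Suc n)" using g' by linarith
  then have "4*(x+1) \<le> t (Suc n)" using x9 by (simp add: mult_le_cancel_left)
  then show ?case unfolding x_def by simp
qed


lemma vSuc: "v (Suc n) = v n * (\<bar>bernoulli (2*Suc n)\<bar> / of_nat (4*Suc n))"
  by (simp add: v_def)

lemma vSuc': "v (n+1) = v n * (\<bar>bernoulli (2*n+2)\<bar> / of_nat (4*n+4))"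
  using vSuc[of n] by simp

lemma num_ne1:
  assumes "r = of_int a / of_int b" "b > 0" "\<not> a dvd b"
  shows "fst (quotient_of r) \<noteq> 1"
proof
  assume h: "fst (quotient_of r) = 1"
  obtain p q where pq: "quotient_of r = (p, q)" by (cases "quotient_of r")
  with h have p: "p = 1" by simp
  have q: "q > 0" using quotient_of_denom_pos[OF pq] .
  have "r = of_int 1 / of_int q" using quotient_of_div[OF pq] p by simp
  with assms(1) have "(of_int a :: rat) / of_int b = 1 / of_int q" by simp
  then have "(of_int (a * q) :: rat) = of_int b" using q assms(2) by (simp add: field_simps)
  then have "a * q = b" by (simp only: of_int_eq_iff)
  then have "a dvd b" by (metis dvd_triv_left)
  with assms(3) show False by simp
qed

lemma v0: "v 0 = 1" by (simp add: v_def)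
lemma v1s: "v (Suc 0) = 1 / 24" using vSuc[of 0] by (simp add: v0 b2)
lemma v1: "v 1 = 1 / 24" using v1s by simp
lemma v2s: "v (Suc (Suc 0)) = 1 / 5760" using vSuc[of "Suc 0"] by (simp add: v1s b4)
lemma v2: "v 2 = 1 / 5760" using v2s by (simp add: numeral_2_eq_2)
lemma v3: "v 3 = 1 / 2903040" using vSuc'[of 2] by (simp add: v2 b6)
lemma v4: "v 4 = 1 / 1393459200" using vSuc'[of 3] by (simp add: v3 b8)
lemma v5: "v 5 = 1 / 367873228800" using vSuc'[of 4] by (simp add: v4 b10)
lemma v6: "v 6 = 691 / 24103053950976000" using vSuc'[of 5] by (simp add: v5 b12)
lemma q6: "fst (quotient_of (v 6)) \<noteq> 1" by (rule num_ne1[of _ 691 24103053950976000]) (simp_all add: v6)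
lemma v7: "v 7 = 691 / 578473294823424000" using vSuc'[of 6] by (simp add: v6 b14)
lemma q7: "fst (quotient_of (v 7)) \<noteq> 1" by (rule num_ne1[of _ 691 578473294823424000]) (simp_all add: v7)
lemma v8: "v 8 = 2499347 / 9440684171518279680000" using vSuc'[of 7] by (simp add: v7 b16)
lemma q8: "fst (quotient_of (v 8)) \<noteq> 1" by (rule num_ne1[of _ 2499347 9440684171518279680000]) (simp_all add: v8)
lemma v9: "v 9 = 109638854849 / 271211974879377138647040000" using vSuc'[of 8] by (simp add: v8 b18)
lemma q9: "fst (quotient_of (v 9)) \<noteq> 1" by (rule num_ne1[of _ 109638854849 271211974879377138647040000]) (simp_all add: v9)
lemma v10: "v 10 = 19144150084038739 / 3579998068407778230140928000000" using vSuc'[of 9] by (simp add: v9 b20)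
lemma q10: "fst (quotient_of (v 10)) \<noteq> 1" by (rule num_ne1[of _ 19144150084038739 3579998068407778230140928000000]) (simp_all add: v10)
lemma v11: "v 11 = 1487175010978381361737 / 1976158933761093583037792256000000" using vSuc'[of 10] by (simp add: v10 b22)
lemma q11: "fst (quotient_of (v 11)) \<noteq> 1" by (rule num_ne1[of _ 1487175010978381361737 1976158933761093583037792256000000]) (simp_all add: v11)
lemma v12: "v 12 = 351514769627820131218308186067 / 258955866680053703121272297226240000000" using vSuc'[of 11] by (simp add: v11 b24)
lemma q12: "fst (quotient_of (v 12)) \<noteq> 1" by (rule num_ne1[of _ 351514769627820131218308186067 258955866680053703121272297226240000000]) (simp_all add: v12)
lemma v13: "v 13 = 231272463896001326752592723167247377 / 6214940800321288874910535133429760000000" using vSuc'[of 12] by (simp add: v12 b26)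
lemma q13: "fst (quotient_of (v 13)) \<noteq> 1" by (rule num_ne1[of _ 231272463896001326752592723167247377 6214940800321288874910535133429760000000]) (simp_all add: v13)
lemma v14: "v 14 = 784656624054127574091856571938503861323424419 / 43255987970236170569377324528671129600000000" using vSuc'[of 13] by (simp add: v13 b28)

lemma abs_bern: "j \<ge> 1 \<Longrightarrow> \<bar>bernoulli (2*j)\<bar> = t j"
  using t_pos[of j] by (simp add: bern_t abs_mult)

lemma v_big: "n \<ge> 14 \<Longrightarrow> v n > 1"
proof (induction n rule: dec_induct)
  case base then show ?case by (simp add: v14)
next
  case (step n)
  have a: "\<bar>bernoulli (2*Suc n)\<bar> / of_nat (4*Suc n) \<ge> 1"
    using abs_bern[of "Suc n"] t_big[of "Suc n"] step.hyps by simp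
  have "v n * 1 \<le> v n * (\<bar>bernoulli (2*Suc n)\<bar> / of_nat (4*Suc n))"
    using a step.IH by (intro mult_left_mono) auto
  then show ?case using step.IH vSuc[of n] by (simp only: mult_1_right)
qed

theorem lemma2p5:
  fixes n :: nat
  assumes "n \<ge> 6"
  shows "v n > 1 \<or> fst (quotient_of (v n)) \<noteq> 1"
proof (cases "n \<ge> 14")
  case True then show ?thesis using v_big by blast
next
  case False
  then have "n = 6 \<or> n = 7 \<or> n = 8 \<or> n = 9 \<or> n = 10 \<or> n = 11 \<or> n = 12 \<or> n = 13"
    using assms by arith
  then show ?thesis using q6 q7 q8 q9 q10 q11 q12 q13 by blast
qed

end
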